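(* Fix a reflection matrix $\mathbf\Phi$ and suppose problem (SDR3.3) has an optimal solution. Then there exists an optimal solution $(\{\mathbf W_k^\star\},\mathbf R_0^\star,u^\star)$ of (SDR3.3) with $\mathbf R_0^\star=\mathbf 0$.
   Context: Let $M,N,K\ge1$ be integers and $\mathcal K=\{1,\dots,K\}$. Fixed data: $\mathbf G\in\mathbb C^{N\times M}$, $\mathbf h_{\mathrm d,k}\in\mathbb C^{M}$, $\mathbf h_{\mathrm r,k}\in\mathbb C^{N}$ ($k\in\mathcal K$), thresholds $\Gamma_k>0$, noise powers $\sigma_k^2>0$, power budget $P_0>0$, an angle $\theta$, spacing $d>0$ and wavelength $\lambda>0$. A reflection matrix is $\mathbf\Phi=\mathrm{diag}(\mathbf v)$, $\mathbf v\in\mathbb C^N$, $|v_n|=1$. For given $\mathbf\Phi$: $\mathbf h_k=\mathbf h_{\mathrm d,k}+\mathbf G^H\mathbf\Phi^H\mathbf h_{\mathrm r,k}$, $\mathbf H_k=\mathbf h_k\mathbf h_k^H$. Let $\mathbf a(\theta)\in\mathbb C^N$ have entries $e^{j2\pi (n-1)d\sin\theta/\lambda}$, $n=1,\dots,N$, and $\dot{\mathbf a}(\theta)$ its derivative in $\theta$; put $\mathbf b=\mathbf G^T\mathbf\Phi^T\mathbf a(\theta)$, $\dot{\mathbf b}=\mathbf G^T\mathbf\Phi^T\dot{\mathbf a}(\theta)$, $\mathbf B=\mathbf b\mathbf b^T$, $\dot{\mathbf B}=\dot{\mathbf b}\mathbf b^T+\mathbf b\dot{\mathbf b}^T$. For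 Hermitian $\mathbf R$ and $u\in\mathbb R$ let $$\mathcal M(\mathbf R,u)=\begin{bmatrix}\mathrm{tr}(\dot{\mathbf B}\mathbf R\dot{\mathbf B}^H)-u & \mathrm{tr}(\mathbf B\mathbf R\dot{\mathbf B}^H)\\ \mathrm{tr}(\dot{\mathbf B}\mathbf R\mathbf B^H) & \mathrm{tr}(\mathbf B\mathbf R\mathbf B^H)\end{bmatrix}.$$ Problem (SDR3.3) (fixed $\mathbf\Phi$): maximize $u$ over Hermitian $\mathbf W_k\succeq\mathbf 0$, $\mathbf R_0\succeq\mathbf 0$, $u\in\mathbb R$, subject to $\mathcal M(\sum_k\mathbf W_k+\mathbf R_0,u)\succeq\mathbf 0$, $(1+\tfrac1{\Gamma_k})\mathrm{tr}(\mathbf H_k\mathbf W_k)-\mathrm{tr}(\mathbf H_k(\sum_i\mathbf W_i+\mathbf R_0))\ge\sigma_k^2$ for all $k$, and $\sum_k\mathrm{tr}(\mathbf W_k)+\mathrm{tr}(\mathbf R_0)\le P_0$. *)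

theory Defs
  imports "HOL-Analysis.Analysis"
begin

text \<open>Complex matrices / vectors with explicit dimensions, represented as
  functions on 0-based natural-number indices; only entries with indices
  below the stated dimensions are ever inspected.\<close>

type_synonym cmat = "nat \<Rightarrow> nat \<Rightarrow> complex"
type_synonym cvec = "nat \<Rightarrow> complex"

definition mmul :: "nat \<Rightarrow> cmat \<Rightarrow> cmat \<Rightarrow> cmat" where
  "mmul n A B = (\<lambda>i j. \<Sum>l<n. A i l * B l j)"

definition mvmul :: "nat \<Rightarrow> cmat \<Rightarrow> cvec \<Rightarrow> cvec" where
  "mvmul n A x = (\<lambda>i. \<Sum>l<n. A i l * x l)"

definition adj :: "cmat \<Rightarrow> cmat" where
  "adj A = (\<lambda>i j. cnj (A j i))"

definition madd :: "cmat \<Rightarrow> cmat \<Rightarrow> cmat" where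
  "madd A B = (\<lambda>i j. A i j + B i j)"

definition msum :: "(nat \<Rightarrow> cmat) \<Rightarrow> nat set \<Rightarrow> cmat" where
  "msum W S = (\<lambda>i j. \<Sum>k\<in>S. W k i j)"

definition transp :: "cmat \<Rightarrow> cmat" where
  "transp A = (\<lambda>i j. A j i)"

definition mtrace :: "nat \<Rightarrow> cmat \<Rightarrow> complex" where
  "mtrace n A = (\<Sum>i<n. A i i)"

definition diagm :: "cvec \<Rightarrow> cmat" where
  "diagm v = (\<lambda>i j. if i = j then v i else 0)"

definition hermitian :: "nat \<Rightarrow> cmat \<Rightarrow> bool" where
  "hermitian n A \<longleftrightarrow> (\<forall>i<n. \<forall>j<n. A i j = cnj (A j i))"

definition psd :: "nat \<Rightarrow> cmat \<Rightarrow> bool" where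
  "psd n A \<longleftrightarrow> hermitian n A \<and>
     (\<forall>x::cvec. (\<Sum>i<n. \<Sum>j<n. cnj (x i) * A i j * x j) \<in> \<real> \<and>
                0 \<le> Re (\<Sum>i<n. \<Sum>j<n. cnj (x i) * A i j * x j))"

text \<open>Steering vector a(theta) (entry index n = 0..N-1 corresponds to the
  paper's (n-1)) and its entrywise derivative in theta.\<close>
definition steer :: "real \<Rightarrow> real \<Rightarrow> real \<Rightarrow> cvec" where
  "steer d lam th = (\<lambda>n. exp (\<i> * complex_of_real (2 * pi * real n * d * sin th / lam)))"

definition steer_dot :: "real \<Rightarrow> real \<Rightarrow> real \<Rightarrow> cvec" where
  "steer_dot d lam th = (\<lambda>n. vector_derivative (\<lambda>t. steer d lam t n) (at th))"

text \<open>Effective channel h_k = h_{d,k} + G^H Phi^H h_{r,k}  (G is N x M).\<close>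
definition hk :: "nat \<Rightarrow> cmat \<Rightarrow> cvec \<Rightarrow> cvec \<Rightarrow> cvec \<Rightarrow> cvec" where
  "hk N G v hdir hris = (\<lambda>i. hdir i + mvmul N (adj G) (mvmul N (adj (diagm v)) hris) i)"

definition outer :: "cvec \<Rightarrow> cvec \<Rightarrow> cmat" where
  "outer x y = (\<lambda>i j. x i * cnj (y j))"

definition Hk :: "nat \<Rightarrow> cmat \<Rightarrow> cvec \<Rightarrow> cvec \<Rightarrow> cvec \<Rightarrow> cmat" where
  "Hk N G v hdir hris = outer (hk N G v hdir hris) (hk N G v hdir hris)"

definition bvec :: "nat \<Rightarrow> cmat \<Rightarrow> cvec \<Rightarrow> real \<Rightarrow> real \<Rightarrow> real \<Rightarrow> cvec" where
  "bvec N G v d lam th = mvmul N (transp G) (mvmul N (transp (diagm v)) (steer d lam th))"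

definition bdvec :: "nat \<Rightarrow> cmat \<Rightarrow> cvec \<Rightarrow> real \<Rightarrow> real \<Rightarrow> real \<Rightarrow> cvec" where
  "bdvec N G v d lam th = mvmul N (transp G) (mvmul N (transp (diagm v)) (steer_dot d lam th))"

definition Bmat :: "nat \<Rightarrow> cmat \<Rightarrow> cvec \<Rightarrow> real \<Rightarrow> real \<Rightarrow> real \<Rightarrow> cmat" where
  "Bmat N G v d lam th = (\<lambda>i j. bvec N G v d lam th i * bvec N G v d lam th j)"

definition Bdmat :: "nat \<Rightarrow> cmat \<Rightarrow> cvec \<Rightarrow> real \<Rightarrow> real \<Rightarrow> real \<Rightarrow> cmat" where
  "Bdmat N G v d lam th = (\<lambda>i j. bdvec N G v d lam th i * bvec N G v d lam th j
                                 + bvec N G v d lam th i * bdvec N G v d lam th j)"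

definition FIMmat :: "nat \<Rightarrow> nat \<Rightarrow> cmat \<Rightarrow> cvec \<Rightarrow> real \<Rightarrow> real \<Rightarrow> real \<Rightarrow> cmat \<Rightarrow> real \<Rightarrow> cmat" where
  "FIMmat M N G v d lam th R u =
    (let B = Bmat N G v d lam th; Bd = Bdmat N G v d lam th;
         t = (\<lambda>X Y. mtrace M (mmul M (mmul M X R) (adj Y)))
     in (\<lambda>i j. if i = 0 \<and> j = 0 then t Bd Bd - complex_of_real u
              else if i = 0 \<and> j = 1 then t B Bd
              else if i = 1 \<and> j = 0 then t Bd B
              else if i = 1 \<and> j = 1 then t B B
              else 0))"

text \<open>Feasible set of (SDR3.3) for fixed reflection vector v (Phi = diag v);
  users are indexed by k in {1..K}.  Traces of products of Hermitian matrices
  are real; their real parts are compared.\<close>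
definition SDR33_feasible ::
  "nat \<Rightarrow> nat \<Rightarrow> nat \<Rightarrow> cmat \<Rightarrow> (nat \<Rightarrow> cvec) \<Rightarrow> (nat \<Rightarrow> cvec) \<Rightarrow> (nat \<Rightarrow> real) \<Rightarrow>
   (nat \<Rightarrow> real) \<Rightarrow> real \<Rightarrow> real \<Rightarrow> real \<Rightarrow> real \<Rightarrow> cvec \<Rightarrow>
   (nat \<Rightarrow> cmat) \<Rightarrow> cmat \<Rightarrow> real \<Rightarrow> bool" where
  "SDR33_feasible M N K G hdir hris Gam sig2 P0 th d lam v W R0 u \<longleftrightarrow>
     (\<forall>k\<in>{1..K}. psd M (W k)) \<and> psd M R0 \<and>
     psd 2 (FIMmat M N G v d lam th (madd (msum W {1..K}) R0) u) \<and>
     (\<forall>k\<in>{1..K}.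
        (1 + 1 / Gam k) * Re (mtrace M (mmul M (Hk N G v (hdir k) (hris k)) (W k)))
        - Re (mtrace M (mmul M (Hk N G v (hdir k) (hris k)) (madd (msum W {1..K}) R0)))
        \<ge> sig2 k) \<and>
     (\<Sum>k\<in>{1..K}. Re (mtrace M (W k))) + Re (mtrace M R0) \<le> P0"

definition SDR33_optimal ::
  "nat \<Rightarrow> nat \<Rightarrow> nat \<Rightarrow> cmat \<Rightarrow> (nat \<Rightarrow> cvec) \<Rightarrow> (nat \<Rightarrow> cvec) \<Rightarrow> (nat \<Rightarrow> real) \<Rightarrow>
   (nat \<Rightarrow> real) \<Rightarrow> real \<Rightarrow> real \<Rightarrow> real \<Rightarrow> real \<Rightarrow> cvec \<Rightarrow>
   (nat \<Rightarrow> cmat) \<Rightarrow> cmat \<Rightarrow> real \<Rightarrow> bool" where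
  "SDR33_optimal M N K G hdir hris Gam sig2 P0 th d lam v W R0 u \<longleftrightarrow>
     SDR33_feasible M N K G hdir hris Gam sig2 P0 th d lam v W R0 u \<and>
     (\<forall>W' R0' u'. SDR33_feasible M N K G hdir hris Gam sig2 P0 th d lam v W' R0' u' \<longrightarrow> u' \<le> u)"

end

theory Submission
  imports Defs
begin

lemma psd_madd: assumes "psd n A" "psd n B" shows "psd n (madd A B)"
proof -
  have hA: "hermitian n A" using assms(1) unfolding psd_def by (rule conjunct1)
  have hB: "hermitian n B" using assms(2) unfolding psd_def by (rule conjunct1)
  have h: "hermitian n (madd A B)" unfolding hermitian_def
  proof (intro allI impI)
    fix i j assume ij: "i < n" "j < n"
    have a: "A i j = cnj (A j i)" using hA ij unfolding hermitian_def by blast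
    have b: "B i j = cnj (B j i)" using hB ij unfolding hermitian_def by blast
    show "madd A B i j = cnj (madd A B j i)" unfolding madd_def complex_cnj_add
      by (subst a, subst b) (rule refl)
  qed
  have e: "\<And>x. (\<Sum>i<n. \<Sum>j<n. cnj (x i) * madd A B i j * x j) =
     (\<Sum>i<n. \<Sum>j<n. cnj (x i) * A i j * x j) + (\<Sum>i<n. \<Sum>j<n. cnj (x i) * B i j * x j)"
    by (simp add: madd_def distrib_left distrib_right sum.distrib)
  have "(\<Sum>i<n. \<Sum>j<n. cnj (x i) * madd A B i j * x j) \<in> \<real> \<and>
        0 \<le> Re (\<Sum>i<n. \<Sum>j<n. cnj (x i) * madd A B i j * x j)" for x
  proof -
    have a: "(\<Sum>i<n. \<Sum>j<n. cnj (x i) * A i j * x j) \<in> \<real> \<and> 0 \<le> Re (\<Sum>i<n. \<Sum>j<n. cnj (x i) * A i j * x j)"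
      using assms(1) unfolding psd_def by blast
    have b: "(\<Sum>i<n. \<Sum>j<n. cnj (x i) * B i j * x j) \<in> \<real> \<and> 0 \<le> Re (\<Sum>i<n. \<Sum>j<n. cnj (x i) * B i j * x j)"
      using assms(2) unfolding psd_def by blast
    show ?thesis unfolding e using a b by (simp add: Reals_add)
  qed
  then show ?thesis using h unfolding psd_def by blast
qed

lemma tr_HR_nonneg: assumes "psd M R" shows "0 \<le> Re (mtrace M (mmul M (outer h h) R))"
proof -
  have "mtrace M (mmul M (outer h h) R) = (\<Sum>i<M. \<Sum>l<M. h i * cnj (h l) * R l i)"
    unfolding mtrace_def mmul_def outer_def by simp
  also have "\<dots> = (\<Sum>l<M. \<Sum>i<M. h i * cnj (h l) * R l i)" by (rule sum.swap)
  also have "\<dots> = (\<Sum>i<M. \<Sum>j<M. cnj (h i) * R i j * h j)"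
    by (simp add: mult_ac)
  finally have E: "mtrace M (mmul M (outer h h) R) = (\<Sum>i<M. \<Sum>j<M. cnj (h i) * R i j * h j)" .
  have "0 \<le> Re (\<Sum>i<M. \<Sum>j<M. cnj (h i) * R i j * h j)"
    using assms unfolding psd_def by blast
  thus ?thesis unfolding E .
qed

lemma tr_madd: "mtrace M (mmul M H (madd A B)) = mtrace M (mmul M H A) + mtrace M (mmul M H B)"
  unfolding mtrace_def mmul_def madd_def by (simp add: distrib_left sum.distrib)

lemma trace_madd: "mtrace M (madd A B) = mtrace M A + mtrace M B"
  unfolding mtrace_def madd_def by (simp add: sum.distrib)

theorem proposition7:
  fixes M N K :: nat
    and G :: cmat and hdir hris :: "nat \<Rightarrow> cvec"
    and Gam sig2 :: "nat \<Rightarrow> real" and P0 th d lam :: real and v :: cvec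
  assumes "M \<ge> 1" and "N \<ge> 1" and "K \<ge> 1"
    and "\<forall>k\<in>{1..K}. Gam k > 0" and "\<forall>k\<in>{1..K}. sig2 k > 0"
    and "P0 > 0" and "d > 0" and "lam > 0"
    and "\<forall>n<N. cmod (v n) = 1"
    and "\<exists>W R0 u. SDR33_optimal M N K G hdir hris Gam sig2 P0 th d lam v W R0 u"
  shows "\<exists>W R0 u. SDR33_optimal M N K G hdir hris Gam sig2 P0 th d lam v W R0 u \<and>
                 R0 = (\<lambda>i j. 0)"
proof -
  obtain W R0 u where opt: "SDR33_optimal M N K G hdir hris Gam sig2 P0 th d lam v W R0 u"
    using assms(10) by blast
  have F: "SDR33_feasible M N K G hdir hris Gam sig2 P0 th d lam v W R0 u"
    using opt unfolding SDR33_optimal_def by (rule conjunct1)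
  note Fu = F[unfolded SDR33_feasible_def]
  have Fw: "\<forall>k\<in>{1..K}. psd M (W k)" using Fu by (rule conjunct1)
  have Fr: "psd M R0" using Fu by (elim conjE)
  have Ff: "psd 2 (FIMmat M N G v d lam th (madd (msum W {1..K}) R0) u)" using Fu by (elim conjE)
  have Fs: "\<forall>k\<in>{1..K}.
        (1 + 1 / Gam k) * Re (mtrace M (mmul M (Hk N G v (hdir k) (hris k)) (W k)))
        - Re (mtrace M (mmul M (Hk N G v (hdir k) (hris k)) (madd (msum W {1..K}) R0)))
        \<ge> sig2 k" using Fu by (elim conjE)
  have Fp: "(\<Sum>k\<in>{1..K}. Re (mtrace M (W k))) + Re (mtrace M R0) \<le> P0" using Fu by (elim conjE)
  define W' where "W' = W(1 := madd (W 1) R0)"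
  define Z :: cmat where "Z = (\<lambda>i j. 0)"
  have one: "1 \<in> {1..K}" using assms(3) by simp
  have S: "madd (msum W' {1..K}) Z = madd (msum W {1..K}) R0"
  proof (intro ext)
    fix i j
    have "(\<Sum>k\<in>{1..K}. W' k i j) = W' 1 i j + (\<Sum>k\<in>{1..K}-{1}. W' k i j)"
      by (rule sum.remove[OF finite_atLeastAtMost one])
    also have "(\<Sum>k\<in>{1..K}-{1}. W' k i j) = (\<Sum>k\<in>{1..K}-{1}. W k i j)"
      by (rule sum.cong) (auto simp: W'_def)
    also have "(\<Sum>k\<in>{1..K}. W k i j) = W 1 i j + (\<Sum>k\<in>{1..K}-{1}. W k i j)"
      by (rule sum.remove[OF finite_atLeastAtMost one])
    ultimately show "madd (msum W' {1..K}) Z i j = madd (msum W {1..K}) R0 i j"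
      by (simp add: madd_def msum_def Z_def W'_def)
  qed
  have trZ: "mtrace M Z = 0" by (simp add: mtrace_def Z_def)
  have psdZ: "psd M Z" by (simp add: psd_def hermitian_def Z_def)
  have P: "(\<Sum>k\<in>{1..K}. Re (mtrace M (W' k))) = (\<Sum>k\<in>{1..K}. Re (mtrace M (W k))) + Re (mtrace M R0)"
  proof -
    have "(\<Sum>k\<in>{1..K}. Re (mtrace M (W' k))) = Re (mtrace M (W' 1)) + (\<Sum>k\<in>{1..K}-{1}. Re (mtrace M (W' k)))"
      by (rule sum.remove[OF finite_atLeastAtMost one])
    also have "(\<Sum>k\<in>{1..K}-{1}. Re (mtrace M (W' k))) = (\<Sum>k\<in>{1..K}-{1}. Re (mtrace M (W k)))"
      by (rule sum.cong) (auto simp: W'_def)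
    also have "(\<Sum>k\<in>{1..K}. Re (mtrace M (W k))) = Re (mtrace M (W 1)) + (\<Sum>k\<in>{1..K}-{1}. Re (mtrace M (W k)))"
      by (rule sum.remove[OF finite_atLeastAtMost one])
    ultimately show ?thesis by (simp add: W'_def trace_madd)
  qed
  have F': "SDR33_feasible M N K G hdir hris Gam sig2 P0 th d lam v W' Z u"
    unfolding SDR33_feasible_def
  proof (intro conjI ballI)
    fix k assume k: "k \<in> {1..K}"
    show "psd M (W' k)"
    proof (cases "k = 1")
      case True
      then show ?thesis using psd_madd[of M "W 1" R0] Fw Fr one by (simp add: W'_def)
    next
      case False
      then show ?thesis using Fw k by (simp add: W'_def)
    qed
  next
    show "psd M Z" by (rule psdZ)
  next
    show "psd 2 (FIMmat M N G v d lam th (madd (msum W' {1..K}) Z) u)"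
      unfolding S by (rule Ff)
  next
    fix k assume k: "k \<in> {1..K}"
    let ?H = "Hk N G v (hdir k) (hris k)"
    have old: "(1 + 1 / Gam k) * Re (mtrace M (mmul M ?H (W k)))
        - Re (mtrace M (mmul M ?H (madd (msum W {1..K}) R0))) \<ge> sig2 k"
      using Fs k by blast
    have ge: "Re (mtrace M (mmul M ?H (W' k))) \<ge> Re (mtrace M (mmul M ?H (W k)))"
    proof (cases "k = 1")
      case True
      have "0 \<le> Re (mtrace M (mmul M ?H R0))"
        unfolding Hk_def by (rule tr_HR_nonneg) (rule Fr)
      thus ?thesis using True by (simp add: W'_def tr_madd)
    qed (simp add: W'_def)
    have g: "Gam k > 0" using assms(4) k by blast
    have "(1 + 1 / Gam k) * Re (mtrace M (mmul M ?H (W k))) \<le> (1 + 1 / Gam k) * Re (mtrace M (mmul M ?H (W' k)))"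
      using ge g by (intro mult_left_mono) (auto simp: add_nonneg_nonneg)
    thus "(1 + 1 / Gam k) * Re (mtrace M (mmul M ?H (W' k)))
        - Re (mtrace M (mmul M ?H (madd (msum W' {1..K}) Z))) \<ge> sig2 k"
      using old unfolding S by linarith
  next
    show "(\<Sum>k\<in>{1..K}. Re (mtrace M (W' k))) + Re (mtrace M Z) \<le> P0"
      unfolding P trZ using Fp by simp
  qed
  have "SDR33_optimal M N K G hdir hris Gam sig2 P0 th d lam v W' Z u"
    unfolding SDR33_optimal_def
  proof (rule conjI)
    show "\<forall>W'' R0' u'. SDR33_feasible M N K G hdir hris Gam sig2 P0 th d lam v W'' R0' u' \<longrightarrow> u' \<le> u"
      using opt unfolding SDR33_optimal_def by (rule conjunct2)
  qed (rule F')
  thus ?thesis unfolding Z_def by (intro exI conjI) (assumption, rule refl)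
qed

end
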